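(* Let $\mathbb{F}$ be a field and $n,p,r$ integers with $0<r\le\min(n,p)$, and assume $|\mathbb{F}|>r+1$. Let $J_r := \begin{bmatrix} I_r & 0 \\ 0 & 0 \end{bmatrix}\in M_{n,p}(\mathbb{F})$ and $M = \begin{bmatrix} A & C \\ B & D \end{bmatrix}\in M_{n,p}(\mathbb{F})$ with $A\in M_r(\mathbb{F})$, $C\in M_{r,p-r}(\mathbb{F})$, $B\in M_{n-r,r}(\mathbb{F})$, $D\in M_{n-r,p-r}(\mathbb{F})$. If $\operatorname{rk}(J_r+tM)\le r$ for all $t\in\mathbb{F}$, then $D=0$ and $BA^kC=0$ for every integer $k\ge 0$. *)

theory Defs
  imports "Jordan_Normal_Form.DL_Rank" "Jordan_Normal_Form.Matrix"
begin

definition J_mat :: "nat \<Rightarrow> nat \<Rightarrow> nat \<Rightarrow> 'a :: field mat" where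
  "J_mat n p r = four_block_mat (1\<^sub>m r) (0\<^sub>m r (p - r)) (0\<^sub>m (n - r) r) (0\<^sub>m (n - r) (p - r))"

end

theory Submission
  imports Defs "Jordan_Normal_Form.DL_Rank_Submatrix"
begin


primrec kry :: "(nat \<Rightarrow> nat \<Rightarrow> 'a::comm_ring_1) \<Rightarrow> nat \<Rightarrow> (nat \<Rightarrow> 'a) \<Rightarrow> nat \<Rightarrow> nat \<Rightarrow> 'a" where
  "kry a r cc 0 = cc"
| "kry a r cc (Suc k) = (\<lambda>m. \<Sum>b<r. a m b * kry a r cc k b)"

lemma sum_pCons0: "(\<Sum>b\<in>S. pCons 0 (f b)) = pCons 0 (\<Sum>b\<in>S. f b)"
  by (induct S rule: infinite_finite_induct) auto

lemma smult_sum_right: "Polynomial.smult c (\<Sum>b\<in>S. f b) = (\<Sum>b\<in>S. Polynomial.smult c (f b))"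
  by (induct S rule: infinite_finite_induct) (auto simp: smult_add_right)

lemma key:
  fixes w :: "nat \<Rightarrow> 'a::field poly" and \<delta> :: "'a poly"
  assumes d0: "poly \<delta> 0 = 1"
  and Eb: "\<And>b. b < r \<Longrightarrow> w b + pCons 0 (\<Sum>l<r. Polynomial.smult (a l b) (w l)) + pCons 0 (Polynomial.smult (bb b) \<delta>) = 0"
  and Er: "pCons 0 (\<Sum>l<r. Polynomial.smult (cc l) (w l)) + pCons 0 (Polynomial.smult d \<delta>) = 0"
  shows "d = 0 \<and> (\<forall>k. (\<Sum>m<r. bb m * kry a r cc k m) = 0)"
proof -
  define h where "h k = (\<Sum>l<r. Polynomial.smult (kry a r cc k l) (w l))" for k
  define s where "s k = (\<Sum>m<r. bb m * kry a r cc k m)" for k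
  have w0: "poly (w b) 0 = 0" if "b < r" for b
    using arg_cong[OF Eb[OF that], of "\<lambda>q. poly q 0"] by simp
  have h0: "poly (h k) 0 = 0" for k
    unfolding h_def by (simp add: poly_sum w0)
  have step: "h k + pCons 0 (h (Suc k) + Polynomial.smult (s k) \<delta>) = 0" for k
  proof -
    have "0 = (\<Sum>b<r. Polynomial.smult (kry a r cc k b) (w b + pCons 0 (\<Sum>l<r. Polynomial.smult (a l b) (w l)) + pCons 0 (Polynomial.smult (bb b) \<delta>)))"
      using Eb by simp
    also have "\<dots> = h k + pCons 0 (\<Sum>b<r. \<Sum>l<r. Polynomial.smult (kry a r cc k b * a l b) (w l))
        + pCons 0 (\<Sum>b<r. Polynomial.smult (kry a r cc k b * bb b) \<delta>)"
      by (simp add: h_def smult_add_right sum.distrib sum_pCons0 smult_sum_right smult_sum)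
    also have "(\<Sum>b<r. \<Sum>l<r. Polynomial.smult (kry a r cc k b * a l b) (w l)) = h (Suc k)"
      unfolding h_def by (subst sum.swap) (simp add: smult_sum mult.commute)
    also have "(\<Sum>b<r. Polynomial.smult (kry a r cc k b * bb b) \<delta>) = Polynomial.smult (s k) \<delta>"
      unfolding s_def by (simp add: smult_sum mult.commute)
    finally show ?thesis by (simp add: add.assoc)
  qed
  have Er': "h 0 + Polynomial.smult d \<delta> = 0"
    using Er unfolding h_def by simp
  have dz: "d = 0"
    using arg_cong[OF Er', of "\<lambda>q. poly q 0"] h0[of 0] d0 by simp
  have h0z: "h 0 = 0" using Er' dz by simp
  have hs: "h k = 0 \<and> s k = 0" for k
  proof (induct k)
    case 0
    have "pCons 0 (h (Suc 0) + Polynomial.smult (s 0) \<delta>) = 0" using step[of 0] h0z by simp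
    hence e: "h (Suc 0) + Polynomial.smult (s 0) \<delta> = 0" by simp
    have "s 0 = 0" using arg_cong[OF e, of "\<lambda>q. poly q 0"] h0[of "Suc 0"] d0 by simp
    then show ?case using h0z by simp
  next
    case (Suc k)
    have hS: "h (Suc k) = 0"
    proof -
      have "pCons 0 (h (Suc k) + Polynomial.smult (s k) \<delta>) = 0" using step[of k] Suc by simp
      hence "h (Suc k) + Polynomial.smult (s k) \<delta> = 0" by simp
      thus ?thesis using Suc by simp
    qed
    have "pCons 0 (h (Suc (Suc k)) + Polynomial.smult (s (Suc k)) \<delta>) = 0" using step[of "Suc k"] hS by simp
    hence e: "h (Suc (Suc k)) + Polynomial.smult (s (Suc k)) \<delta> = 0" by simp
    have "s (Suc k) = 0" using arg_cong[OF e, of "\<lambda>q. poly q 0"] h0[of "Suc (Suc k)"] d0 by simp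
    then show ?case using hS by simp
  qed
  show ?thesis using dz hs unfolding s_def by blast
qed



lemma comm_ring_hom_poly_eval: "comm_ring_hom (\<lambda>q::'a::comm_ring_1 poly. poly q t)"
  by unfold_locales (auto simp: poly_mult)

lemma poly_zero_if_many_roots:
  fixes q :: "'a::field poly"
  assumes "\<And>t. poly q t = 0" and "infinite (UNIV :: 'a set) \<or> card (UNIV :: 'a set) > degree q"
  shows "q = 0"
proof (rule ccontr)
  assume q: "q \<noteq> 0"
  have U: "{x. poly q x = 0} = UNIV" using assms(1) by auto
  have "finite (UNIV :: 'a set)" using poly_roots_finite[OF q] U by simp
  moreover have "card (UNIV :: 'a set) \<le> degree q" using card_poly_roots_bound[OF q] U by simp
  ultimately show False using assms(2) by simp
qed

lemma pick_Iset:
  assumes "a < Suc r"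
  shows "pick (insert (r + i) {0..<r}) a = (if a < r then a else r + i)"
proof (cases "a < r")
  case True
  have "{x \<in> insert (r + i) {0..<r}. x < a} = {0..<a}" using True by auto
  then have "card {x \<in> insert (r + i) {0..<r}. x < a} = a" by simp
  then show ?thesis using pick_card_in_set[of a "insert (r + i) {0..<r}"] True by simp
next
  case False
  hence a: "a = r" using assms by simp
  have "{x \<in> insert (r + i) {0..<r}. x < r + i} = {0..<r}" by auto
  then have "card {x \<in> insert (r + i) {0..<r}. x < r + i} = r" by simp
  then show ?thesis using pick_card_in_set[of "r + i" "insert (r + i) {0..<r}"] a by simp
qed

lemma card_Iset:
  assumes "r + i < n"
  shows "card {x. x < n \<and> x \<in> insert (r + i) {0..<r}} = Suc r"
proof -
  have "{x. x < n \<and> x \<in> insert (r + i) {0..<r}} = insert (r + i) {0..<r}" using assms by auto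
  then show ?thesis by simp
qed

lemma pow_mat_comm:
  assumes A: "A \<in> carrier_mat r r"
  shows "A * (A ^\<^sub>m k) = (A ^\<^sub>m k) * A"
proof (induct k)
  case 0
  then show ?case using A by simp
next
  case (Suc k)
  have "A * (A ^\<^sub>m Suc k) = A * (A ^\<^sub>m k * A)" by simp
  also have "\<dots> = (A * A ^\<^sub>m k) * A"
    by (rule assoc_mult_mat[OF A pow_carrier_mat[OF A] A, symmetric])
  also have "\<dots> = (A ^\<^sub>m k * A) * A" using Suc by simp
  also have "\<dots> = A ^\<^sub>m Suc k * A" by simp
  finally show ?case .
qed

lemma kry_pow:
  assumes A: "A \<in> carrier_mat r r" and C: "C \<in> carrier_mat r q" and j: "j < q"
  shows "m < r \<Longrightarrow> kry (\<lambda>l b. A $$ (l, b)) r (\<lambda>l. C $$ (l, j)) k m = (A ^\<^sub>m k * C) $$ (m, j)"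
proof (induct k arbitrary: m)
  case 0
  then show ?case using A C j by simp
next
  case (Suc k)
  have kc: "A ^\<^sub>m k * C \<in> carrier_mat r q" using pow_carrier_mat[OF A] C by (rule mult_carrier_mat)
  have "A ^\<^sub>m Suc k * C = (A ^\<^sub>m k * A) * C" by simp
  also have "\<dots> = (A * A ^\<^sub>m k) * C" using pow_mat_comm[OF A, of k] by simp
  also have "\<dots> = A * (A ^\<^sub>m k * C)"
    by (rule assoc_mult_mat[OF A pow_carrier_mat[OF A] C])
  finally have e: "A ^\<^sub>m Suc k * C = A * (A ^\<^sub>m k * C)" .
  have "(A * (A ^\<^sub>m k * C)) $$ (m, j) = row A m \<bullet> col (A ^\<^sub>m k * C) j"
    by (rule index_mult_mat(1)) (use A kc j Suc.prems in auto)
  also have "\<dots> = (\<Sum>b\<in>{0..<r}. row A m $ b * col (A ^\<^sub>m k * C) j $ b)"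
    unfolding scalar_prod_def using kc A by simp
  also have "\<dots> = (\<Sum>b\<in>{0..<r}. A $$ (m, b) * (A ^\<^sub>m k * C) $$ (b, j))"
    by (rule sum.cong) (use A kc j Suc.prems in auto)
  finally have "(A ^\<^sub>m Suc k * C) $$ (m, j) = (\<Sum>b<r. A $$ (m, b) * (A ^\<^sub>m k * C) $$ (b, j))"
    unfolding e by (simp add: atLeast0LessThan)
  then show ?case using Suc by simp
qed

lemma entry:
  fixes n p r :: nat
    and A B C D :: "'a :: field mat"
  assumes r_n: "r \<le> n" and r_p: "r \<le> p"
    and card_F: "infinite (UNIV :: 'a set) \<or> card (UNIV :: 'a set) > r + 1"
    and A: "A \<in> carrier_mat r r"
    and C: "C \<in> carrier_mat r (p - r)"
    and B: "B \<in> carrier_mat (n - r) r"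
    and D: "D \<in> carrier_mat (n - r) (p - r)"
    and rk: "\<forall>t :: 'a. vec_space.rank n (J_mat n p r + t \<cdot>\<^sub>m four_block_mat A C B D) \<le> r"
    and i: "i < n - r" and j: "j < p - r"
  shows "D $$ (i, j) = 0 \<and> (\<forall>k. (\<Sum>m<r. B $$ (i, m) * kry (\<lambda>l b. A $$ (l, b)) r (\<lambda>l. C $$ (l, j)) k m) = 0)"
proof -
  define M where "M = four_block_mat A C B D"
  define JJ :: "'a mat" where "JJ = J_mat n p r"
  have Mc: "M \<in> carrier_mat n p" unfolding M_def using A D r_n r_p
    by (metis four_block_carrier_mat le_add_diff_inverse)
  have Jc: "JJ \<in> carrier_mat n p" unfolding JJ_def J_mat_def using r_n r_p
    by (metis four_block_carrier_mat le_add_diff_inverse one_carrier_mat zero_carrier_mat)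
  define pk where "pk a = (if a < r then a else r + i)" for a
  define qk where "qk b = (if b < r then b else r + j)" for b
  define SX where "SX = mat (Suc r) (Suc r) (\<lambda>(a,b). [: JJ $$ (pk a, qk b), M $$ (pk a, qk b) :])"
  have SXc: "SX \<in> carrier_mat (Suc r) (Suc r)" unfolding SX_def by simp
  define Iset where "Iset = insert (r + i) {0..<r}"
  define Jset where "Jset = insert (r + j) {0..<r}"
  have ri: "r + i < n" and rj: "r + j < p" using i j by auto
  have sub: "map_mat (\<lambda>q. poly q t) SX = submatrix (JJ + t \<cdot>\<^sub>m M) Iset Jset" for t
  proof (rule eq_matI)
    show "dim_row (map_mat (\<lambda>q. poly q t) SX) = dim_row (submatrix (JJ + t \<cdot>\<^sub>m M) Iset Jset)"
      using card_Iset[OF ri] Mc Jc unfolding SX_def Iset_def by (simp add: dim_submatrix)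
    show "dim_col (map_mat (\<lambda>q. poly q t) SX) = dim_col (submatrix (JJ + t \<cdot>\<^sub>m M) Iset Jset)"
      using card_Iset[OF rj] Mc Jc unfolding SX_def Jset_def by (simp add: dim_submatrix)
    fix a b assume a: "a < dim_row (submatrix (JJ + t \<cdot>\<^sub>m M) Iset Jset)"
      and b: "b < dim_col (submatrix (JJ + t \<cdot>\<^sub>m M) Iset Jset)"
    have a': "a < Suc r" and b': "b < Suc r"
      using a b card_Iset[OF ri] card_Iset[OF rj] Mc Jc unfolding Iset_def Jset_def by (auto simp: dim_submatrix)
    have si: "submatrix (JJ + t \<cdot>\<^sub>m M) Iset Jset $$ (a, b) = (JJ + t \<cdot>\<^sub>m M) $$ (pick Iset a, pick Jset b)"
      by (rule submatrix_index) (use a b in \<open>simp_all add: dim_submatrix\<close>)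
    have pa: "pick Iset a = pk a" unfolding Iset_def pk_def using pick_Iset[OF a'] .
    have pb: "pick Jset b = qk b" unfolding Jset_def qk_def using pick_Iset[OF b'] .
    have "pk a < n" "qk b < p" using a' b' ri rj r_n r_p unfolding pk_def qk_def by auto
    then show "map_mat (\<lambda>q. poly q t) SX $$ (a, b) = submatrix (JJ + t \<cdot>\<^sub>m M) Iset Jset $$ (a, b)"
      using a b a' b' Mc Jc
      by (simp add: si pa pb SX_def)
  qed
  have detz: "poly (det SX) t = 0" for t
  proof (rule ccontr)
    assume "poly (det SX) t \<noteq> 0"
    hence "det (submatrix (JJ + t \<cdot>\<^sub>m M) Iset Jset) \<noteq> 0"
      using comm_ring_hom.hom_det[OF comm_ring_hom_poly_eval, of t SX] sub[of t] by simp
    moreover have "JJ + t \<cdot>\<^sub>m M \<in> carrier_mat n p" using Mc Jc by simp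
    ultimately have "card {b. b < p \<and> b \<in> Jset} \<le> vec_space.rank n (JJ + t \<cdot>\<^sub>m M)"
      using vec_space.rank_gt_minor by blast
    moreover have "card {b. b < p \<and> b \<in> Jset} = Suc r" using card_Iset[OF rj] unfolding Jset_def .
    ultimately show False using rk unfolding JJ_def M_def by (metis not_less_eq_eq)
  qed
  have "degree (det SX) \<le> 1 * Suc r"
    by (rule degree_det_le[OF _ SXc]) (simp add: SX_def)
  hence detSX: "det SX = 0"
    using poly_zero_if_many_roots[OF detz] card_F by auto
  have SXe: "SX $$ (l, b) = [: (if l = b \<and> l < r then 1 else 0),
      (if l < r then (if b < r then A $$ (l, b) else C $$ (l, j)) else (if b < r then B $$ (i, b) else D $$ (i, j))) :]"
    if l: "l < Suc r" and b: "b < Suc r" for l b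
    using l b A B C D ri rj r_n r_p
    by (auto simp: SX_def JJ_def J_mat_def M_def pk_def qk_def)
  define adjS where "adjS = adj_mat SX"
  have adjc: "adjS \<in> carrier_mat (Suc r) (Suc r)" unfolding adjS_def using adj_mat(1)[OF SXc] .
  have prod0: "adjS * SX = 0\<^sub>m (Suc r) (Suc r)"
    unfolding adjS_def adj_mat(3)[OF SXc] detSX by auto
  define w where "w l = adjS $$ (r, l)" for l
  define \<delta> where "\<delta> = adjS $$ (r, r)"
  have colEq: "(\<Sum>l<r. w l * SX $$ (l, b)) + \<delta> * SX $$ (r, b) = 0" if b: "b < Suc r" for b
  proof -
    have "(adjS * SX) $$ (r, b) = 0\<^sub>m (Suc r) (Suc r) $$ (r, b)" unfolding prod0 ..
    also have "\<dots> = 0" by (rule index_zero_mat(1)) (use b in auto)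
    finally have "(adjS * SX) $$ (r, b) = 0" .
    moreover have "(adjS * SX) $$ (r, b) = (\<Sum>l<Suc r. adjS $$ (r, l) * SX $$ (l, b))"
    proof -
      have "(adjS * SX) $$ (r, b) = row adjS r \<bullet> col SX b"
        by (rule index_mult_mat(1)) (use adjc SXc b in auto)
      also have "\<dots> = (\<Sum>l\<in>{0..<Suc r}. row adjS r $ l * col SX b $ l)"
        unfolding scalar_prod_def using SXc by simp
      also have "\<dots> = (\<Sum>l\<in>{0..<Suc r}. adjS $$ (r, l) * SX $$ (l, b))"
        by (rule sum.cong) (use adjc SXc b in auto)
      finally show ?thesis by (simp add: atLeast0LessThan)
    qed
    ultimately show ?thesis unfolding w_def \<delta>_def by simp
  qed
  have Eb: "w b + pCons 0 (\<Sum>l<r. Polynomial.smult (A $$ (l, b)) (w l)) + pCons 0 (Polynomial.smult (B $$ (i, b)) \<delta>) = 0"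
    if b: "b < r" for b
  proof -
    have "(\<Sum>l<r. w l * SX $$ (l, b)) = (\<Sum>l<r. Polynomial.smult (if l = b then 1 else 0) (w l) + pCons 0 (Polynomial.smult (A $$ (l, b)) (w l)))"
      by (rule sum.cong) (use b in \<open>auto simp: SXe\<close>)
    also have "\<dots> = w b + pCons 0 (\<Sum>l<r. Polynomial.smult (A $$ (l, b)) (w l))"
      using b by (simp add: sum.distrib sum_pCons0 if_distrib[of "\<lambda>x. Polynomial.smult x _"] cong: if_cong)
    finally show ?thesis using colEq[of b] b by (simp add: SXe)
  qed
  have Er: "pCons 0 (\<Sum>l<r. Polynomial.smult (C $$ (l, j)) (w l)) + pCons 0 (Polynomial.smult (D $$ (i, j)) \<delta>) = 0"
  proof -
    have "(\<Sum>l<r. w l * SX $$ (l, r)) = (\<Sum>l<r. pCons 0 (Polynomial.smult (C $$ (l, j)) (w l)))"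
      by (rule sum.cong) (auto simp: SXe)
    also have "\<dots> = pCons 0 (\<Sum>l<r. Polynomial.smult (C $$ (l, j)) (w l))"
      by (simp add: sum_pCons0)
    finally show ?thesis using colEq[of r] by (simp add: SXe)
  qed
  have d0: "poly \<delta> 0 = 1"
  proof -
    have "\<delta> = det (mat_delete SX r r)"
      unfolding \<delta>_def adjS_def adj_mat_def cofactor_def using SXc by simp
    moreover have "map_mat (\<lambda>q. poly q 0) (mat_delete SX r r) = 1\<^sub>m r"
    proof (rule eq_matI)
      fix a b assume "a < dim_row (1\<^sub>m r :: 'a mat)" "b < dim_col (1\<^sub>m r :: 'a mat)"
      then show "map_mat (\<lambda>q. poly q 0) (mat_delete SX r r) $$ (a, b) = 1\<^sub>m r $$ (a, b)"
        using SXc by (simp add: mat_delete_def SXe)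
    qed (use SXc in auto)
    ultimately show ?thesis
      using comm_ring_hom.hom_det[OF comm_ring_hom_poly_eval, of 0 "mat_delete SX r r"] by simp
  qed
  show ?thesis using key[OF d0 Eb Er] by blast
qed


theorem corollary8:
  fixes n p r :: nat
    and A B C D :: "'a :: field mat"
  assumes r_pos: "0 < r" and r_n: "r \<le> n" and r_p: "r \<le> p"
    and card_F: "infinite (UNIV :: 'a set) \<or> card (UNIV :: 'a set) > r + 1"
    and A: "A \<in> carrier_mat r r"
    and C: "C \<in> carrier_mat r (p - r)"
    and B: "B \<in> carrier_mat (n - r) r"
    and D: "D \<in> carrier_mat (n - r) (p - r)"
    and rk: "\<forall>t :: 'a. vec_space.rank n (J_mat n p r + t \<cdot>\<^sub>m four_block_mat A C B D) \<le> r"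
  shows "D = 0\<^sub>m (n - r) (p - r) \<and> (\<forall>k :: nat. B * (A ^\<^sub>m k) * C = 0\<^sub>m (n - r) (p - r))"
proof
  show "D = 0\<^sub>m (n - r) (p - r)"
  proof (rule eq_matI)
    fix i j assume "i < dim_row (0\<^sub>m (n - r) (p - r) :: 'a mat)" "j < dim_col (0\<^sub>m (n - r) (p - r) :: 'a mat)"
    then show "D $$ (i, j) = 0\<^sub>m (n - r) (p - r) $$ (i, j)"
      using entry[OF r_n r_p card_F A C B D rk] by simp
  qed (use D in \<open>simp_all add: carrier_matD\<close>)
  show "\<forall>k. B * A ^\<^sub>m k * C = 0\<^sub>m (n - r) (p - r)"
  proof
    fix k
    have eq: "B * A ^\<^sub>m k * C = B * (A ^\<^sub>m k * C)"
      by (rule assoc_mult_mat[OF B _ C]) (use A in simp)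
    show "B * A ^\<^sub>m k * C = 0\<^sub>m (n - r) (p - r)"
      unfolding eq
    proof (rule eq_matI)
      fix i j assume i: "i < dim_row (0\<^sub>m (n - r) (p - r) :: 'a mat)" and j: "j < dim_col (0\<^sub>m (n - r) (p - r) :: 'a mat)"
      have "(B * (A ^\<^sub>m k * C)) $$ (i, j) = row B i \<bullet> col (A ^\<^sub>m k * C) j"
        by (rule index_mult_mat(1)) (use A B C i j in auto)
      also have "\<dots> = (\<Sum>m\<in>{0..<r}. row B i $ m * col (A ^\<^sub>m k * C) j $ m)"
        unfolding scalar_prod_def using A C by simp
      also have "\<dots> = (\<Sum>m\<in>{0..<r}. B $$ (i, m) * kry (\<lambda>l b. A $$ (l, b)) r (\<lambda>l. C $$ (l, j)) k m)"
        by (rule sum.cong) (use A B C i j kry_pow[OF A C] in auto)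
      also have "\<dots> = 0"
        using entry[OF r_n r_p card_F A C B D rk] i j by (simp add: atLeast0LessThan)
      finally show "(B * (A ^\<^sub>m k * C)) $$ (i, j) = 0\<^sub>m (n - r) (p - r) $$ (i, j)" using i j by simp
    qed (use A B C in \<open>simp_all add: carrier_matD\<close>)
  qed
qed

end
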